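(* Let $q$ be a prime power and $n\ge1$. For $i=1,2$, let $\mathcal{C}_i$ be a $[2n,n,d_i]_q$ linear code with generator matrix $G_i=(I_n\ \ f_i(A_i))$, where $f_i(x)\in\mathbb{F}_q[x]$ and $A_i$ is an $n\times n$ Toeplitz matrix over $\mathbb{F}_q$. Assume that both $\mathcal{C}_1$ and $\mathcal{C}_2$ are Euclidean (resp. Hermitian, with $q$ an even power of a prime) LCD codes. Then for every integer $s\ge1$ there exists a $[4sn,2sn,\min\{d_1,d_2\}]_q$ code that is Euclidean (resp. Hermitian) formally self-dual and Euclidean (resp. Hermitian) LCD.
   Context: A Toeplitz matrix is a square matrix whose diagonals parallel to the main diagonal each have constant entries. Euclidean inner product $\sum_i x_iy_i$; for $q=p^h$ with $h$ even, Hermitian inner product $\sum_i x_iy_i^{\sqrt q}$. A code $\mathcal{C}$ is Euclidean (resp. Hermitian) LCD if $\mathcal{C}\cap\mathcal{C}^{\perp_E}=\{0\}$ (resp. $\mathcal{C}\cap\mathcal{C}^{\perp_H}=\{0\}$), and formally self-dual if it has the same weight distribution as its dual with respect to the given inner product. *)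

theory Defs
  imports "Jordan_Normal_Form.Matrix" "HOL-Computational_Algebra.Polynomial"
begin

definition toeplitz :: "nat \<Rightarrow> 'a mat \<Rightarrow> bool" where
  "toeplitz n A \<longleftrightarrow> A \<in> carrier_mat n n \<and>
     (\<forall>i j i' j'. i < n \<and> j < n \<and> i' < n \<and> j' < n \<and>
        int j - int i = int j' - int i' \<longrightarrow> A $$ (i, j) = A $$ (i', j'))"

definition poly_mat :: "nat \<Rightarrow> 'a::field poly \<Rightarrow> 'a mat \<Rightarrow> 'a mat" where
  "poly_mat n f A = mat n n (\<lambda>(i, j). \<Sum>k\<le>degree f. coeff f k * (A ^\<^sub>m k) $$ (i, j))"

definition id_block :: "nat \<Rightarrow> 'a::field mat \<Rightarrow> 'a mat" where
  "id_block n B = mat n (2 * n) (\<lambda>(i, j). if j < n then (if i = j then 1 else 0) else B $$ (i, j - n))"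

definition row_space :: "'a::field mat \<Rightarrow> 'a vec set" where
  "row_space G = {transpose_mat G *\<^sub>v u | u. u \<in> carrier_vec (dim_row G)}"

definition is_linear_code :: "nat \<Rightarrow> nat \<Rightarrow> 'a::field vec set \<Rightarrow> bool" where
  "is_linear_code N k C \<longleftrightarrow> (\<exists>G \<in> carrier_mat k N.
      (\<forall>u \<in> carrier_vec k. transpose_mat G *\<^sub>v u = 0\<^sub>v N \<longrightarrow> u = 0\<^sub>v k) \<and> C = row_space G)"

definition hweight :: "'a::zero vec \<Rightarrow> nat" where
  "hweight v = card {i. i < dim_vec v \<and> v $ i \<noteq> 0}"

(* minimum distance = minimum weight of a nonzero codeword (linear code) *)
definition min_dist :: "'a::zero vec set \<Rightarrow> nat" where
  "min_dist C = Min {hweight c | c. c \<in> C \<and> c \<noteq> 0\<^sub>v (dim_vec c)}"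

(* sesquilinear form sum_i x_i * sigma(y_i); sigma = id gives the Euclidean,
   sigma = (%y. y ^ sqrt q) the Hermitian inner product *)
definition sform :: "('a \<Rightarrow> 'a) \<Rightarrow> 'a::field vec \<Rightarrow> 'a vec \<Rightarrow> 'a" where
  "sform \<sigma> x y = (\<Sum>i<dim_vec x. x $ i * \<sigma> (y $ i))"

definition dual_code :: "('a \<Rightarrow> 'a) \<Rightarrow> nat \<Rightarrow> 'a::field vec set \<Rightarrow> 'a vec set" where
  "dual_code \<sigma> N C = {v \<in> carrier_vec N. \<forall>c \<in> C. sform \<sigma> c v = 0}"

definition is_LCD :: "('a \<Rightarrow> 'a) \<Rightarrow> nat \<Rightarrow> 'a::field vec set \<Rightarrow> bool" where
  "is_LCD \<sigma> N C \<longleftrightarrow> C \<inter> dual_code \<sigma> N C = {0\<^sub>v N}"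

definition formally_self_dual :: "('a \<Rightarrow> 'a) \<Rightarrow> nat \<Rightarrow> 'a::field vec set \<Rightarrow> bool" where
  "formally_self_dual \<sigma> N C \<longleftrightarrow>
     (\<forall>w. card {c \<in> C. hweight c = w} = card {c \<in> dual_code \<sigma> N C. hweight c = w})"

end

theory Submission
  imports Defs
begin

definition bt :: "'a::field mat \<Rightarrow> nat \<Rightarrow> 'a vec \<Rightarrow> 'a vec" where
  "bt B m u = vec m (\<lambda>j. \<Sum>k<m. B $$ (k,j) * u $ k)"
definition cw :: "'a::field mat \<Rightarrow> nat \<Rightarrow> 'a vec \<Rightarrow> 'a vec" where
  "cw B m u = vec (2*m) (\<lambda>i. if i < m then u $ i else bt B m u $ (i - m))"
definition wt :: "nat \<Rightarrow> (nat \<Rightarrow> 'a::zero) \<Rightarrow> nat" where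
  "wt m g = (\<Sum>i<m. if g i = 0 then 0 else 1)"

lemma sum_split_add: "(\<Sum>i<a+(b::nat). g i) = (\<Sum>i<a. g i) + (\<Sum>j<b. g (a+j))"
proof (induction b)
  case 0 then show ?case by simp
next
  case (Suc b) then show ?case by (simp add: add.assoc)
qed

lemma sum_blocks: "(\<Sum>i<k*(n::nat). g i) = (\<Sum>t<k. \<Sum>j<n. g (t*n+j))"
proof (induction k)
  case 0 then show ?case by simp
next
  case (Suc k)
  have "(\<Sum>i<Suc k*n. g i) = (\<Sum>i<k*n + n. g i)" by (simp add: add.commute)
  also have "\<dots> = (\<Sum>i<k*n. g i) + (\<Sum>j<n. g (k*n+j))" by (rule sum_split_add)
  finally show ?case using Suc by simp
qed

lemma hweight_wt: "hweight v = wt (dim_vec v) (($) v)"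
proof -
  have "{i. i < dim_vec v \<and> v $ i \<noteq> 0} = {i \<in> {..<dim_vec v}. v $ i \<noteq> 0}" by auto
  then have "hweight v = card {i \<in> {..<dim_vec v}. v $ i \<noteq> 0}" unfolding hweight_def by simp
  also have "\<dots> = (\<Sum>i\<in>{i \<in> {..<dim_vec v}. v $ i \<noteq> 0}. 1)" by simp
  also have "\<dots> = wt (dim_vec v) (($) v)" unfolding wt_def by (subst sum.inter_filter) (auto intro: sum.cong)
  finally show ?thesis .
qed

lemma wt_cong: "(\<And>i. i < m \<Longrightarrow> (g i = 0) = (h i = 0)) \<Longrightarrow> wt m g = wt m h"
  unfolding wt_def by (rule sum.cong) auto

lemma wt_double: "wt (2*m) g = wt m g + wt m (\<lambda>j. g (m+j))"
  unfolding wt_def using sum_split_add[of _ m m] by (simp add: mult_2)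

lemma hweight_cw: "hweight (cw B m u) = wt m (($) u) + wt m (($) (bt B m u))"
proof -
  have "hweight (cw B m u) = wt (2*m) (($) (cw B m u))" by (simp add: hweight_wt cw_def)
  also have "\<dots> = wt m (($) (cw B m u)) + wt m (\<lambda>j. cw B m u $ (m+j))" by (rule wt_double)
  also have "wt m (($) (cw B m u)) = wt m (($) u)" by (rule wt_cong) (simp add: cw_def)
  also have "wt m (\<lambda>j. cw B m u $ (m+j)) = wt m (($) (bt B m u))" by (rule wt_cong) (simp add: cw_def)
  finally show ?thesis .
qed

lemma dim_cw[simp]: "dim_vec (cw B m u) = 2*m" by (simp add: cw_def)
lemma dim_bt[simp]: "dim_vec (bt B m u) = m" by (simp add: bt_def)

lemma cw_lo: "i < m \<Longrightarrow> cw B m u $ i = u $ i" by (simp add: cw_def)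
lemma cw_hi: "j < m \<Longrightarrow> cw B m u $ (m+j) = bt B m u $ j" by (simp add: cw_def)

lemma transpose_id_block:
  assumes B: "B \<in> carrier_mat m m" and u: "u \<in> carrier_vec m"
  shows "transpose_mat (id_block m B) *\<^sub>v u = cw B m u"
proof (rule eq_vecI)
  show "dim_vec (transpose_mat (id_block m B) *\<^sub>v u) = dim_vec (cw B m u)"
    by (simp add: id_block_def)
  fix i assume "i < dim_vec (cw B m u)"
  then have i: "i < 2*m" by simp
  have "(transpose_mat (id_block m B) *\<^sub>v u) $ i = (\<Sum>k<m. id_block m B $$ (k,i) * u $ k)"
    using i u by (simp add: id_block_def scalar_prod_def lessThan_atLeast0)
  also have "\<dots> = cw B m u $ i"
  proof (cases "i < m")
    case True
    then have "(\<Sum>k<m. id_block m B $$ (k,i) * u $ k) = (\<Sum>k<m. (if k = i then u $ k else 0))"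
      by (intro sum.cong) (auto simp: id_block_def)
    then show ?thesis using True by (simp add: cw_def)
  next
    case False
    then have "(\<Sum>k<m. id_block m B $$ (k,i) * u $ k) = (\<Sum>k<m. B $$ (k, i - m) * u $ k)"
      using i by (intro sum.cong) (auto simp: id_block_def)
    then show ?thesis using False i by (simp add: cw_def bt_def)
  qed
  finally show "(transpose_mat (id_block m B) *\<^sub>v u) $ i = cw B m u $ i" .
qed

lemma row_space_id_block:
  assumes B: "B \<in> carrier_mat m m"
  shows "row_space (id_block m B) = cw B m ` carrier_vec m"
proof -
  have d: "dim_row (id_block m B) = m" by (simp add: id_block_def)
  show ?thesis unfolding row_space_def d 
    by (simp add: Setcompr_eq_image transpose_id_block[OF B] cong: image_cong)
qed


lemma finite_carrier_vec_fin: "finite (carrier_vec n :: 'a::finite vec set)"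
proof -
  have "carrier_vec n \<subseteq> vec_of_list ` {xs :: 'a list. length xs = n}"
  proof
    fix v :: "'a vec" assume "v \<in> carrier_vec n"
    then show "v \<in> vec_of_list ` {xs. length xs = n}"
      by (intro image_eqI[of _ _ "list_of_vec v"]) (auto simp: vec_list)
  qed
  moreover have "finite {xs :: 'a list. length xs = n}"
    using finite_lists_length_eq[of "UNIV :: 'a set" n] by simp
  ultimately show ?thesis by (meson finite_imageI finite_subset)
qed

lemma sform_cw:
  "sform \<sigma> (cw B m u) v = (\<Sum>k<m. u $ k * (\<sigma> (v $ k) + (\<Sum>j<m. B $$ (k,j) * \<sigma> (v $ (m+j)))))"
proof -
  have "sform \<sigma> (cw B m u) v = (\<Sum>i<m+m. cw B m u $ i * \<sigma> (v $ i))"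
    by (simp add: sform_def mult_2)
  also have "\<dots> = (\<Sum>i<m. cw B m u $ i * \<sigma> (v $ i)) + (\<Sum>j<m. cw B m u $ (m+j) * \<sigma> (v $ (m+j)))"
    by (rule sum_split_add)
  also have "(\<Sum>i<m. cw B m u $ i * \<sigma> (v $ i)) = (\<Sum>i<m. u $ i * \<sigma> (v $ i))"
    by (rule sum.cong) (auto simp: cw_lo)
  also have "(\<Sum>j<m. cw B m u $ (m+j) * \<sigma> (v $ (m+j))) = (\<Sum>j<m. \<Sum>k<m. B $$ (k,j) * u $ k * \<sigma> (v $ (m+j)))"
    by (rule sum.cong) (auto simp: cw_hi bt_def sum_distrib_right)
  also have "\<dots> = (\<Sum>k<m. \<Sum>j<m. B $$ (k,j) * u $ k * \<sigma> (v $ (m+j)))"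
    by (rule sum.swap)
  also have "(\<Sum>i<m. u $ i * \<sigma> (v $ i)) + \<dots> = (\<Sum>k<m. u $ k * (\<sigma> (v $ k) + (\<Sum>j<m. B $$ (k,j) * \<sigma> (v $ (m+j)))))"
  proof -
    have "(\<Sum>k<m. u $ k * (\<sigma> (v $ k) + (\<Sum>j<m. B $$ (k,j) * \<sigma> (v $ (m+j))))) =
       (\<Sum>k<m. u $ k * \<sigma> (v $ k) + (\<Sum>j<m. B $$ (k,j) * u $ k * \<sigma> (v $ (m+j))))"
      by (intro sum.cong refl) (simp add: distrib_left sum_distrib_left mult.assoc mult.left_commute)
    then show ?thesis by (simp add: sum.distrib)
  qed
  finally show ?thesis .
qed

lemma if_mult_one_zero: "(if P then 1 else 0) * (x::'a::field) = (if P then x else 0)" by simp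

definition dcond :: "('a::field \<Rightarrow> 'a) \<Rightarrow> 'a mat \<Rightarrow> nat \<Rightarrow> 'a vec \<Rightarrow> bool" where
  "dcond \<sigma> B m v \<longleftrightarrow> (\<forall>i<m. \<sigma> (v $ i) + (\<Sum>j<m. B $$ (i,j) * \<sigma> (v $ (m+j))) = 0)"

lemma dual_cw: "dual_code \<sigma> (2*m) (cw B m ` carrier_vec m) = {v \<in> carrier_vec (2*m). dcond \<sigma> B m v}"
proof (rule Set.set_eqI, rule iffI)
  fix v assume v: "v \<in> dual_code \<sigma> (2*m) (cw B m ` carrier_vec m)"
  have "dcond \<sigma> B m v" unfolding dcond_def
  proof (intro allI impI)
    fix i assume i: "i < m"
    have "sform \<sigma> (cw B m (unit_vec m i)) v = 0" using v i unfolding dual_code_def by auto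
    then show "\<sigma> (v $ i) + (\<Sum>j<m. B $$ (i,j) * \<sigma> (v $ (m+j))) = 0" using i unfolding sform_cw by (simp add: unit_vec_def if_mult_one_zero)
  qed
  then show "v \<in> {v \<in> carrier_vec (2*m). dcond \<sigma> B m v}" using v unfolding dual_code_def by auto
next
  fix v assume "v \<in> {v \<in> carrier_vec (2*m). dcond \<sigma> B m v}"
  then show "v \<in> dual_code \<sigma> (2*m) (cw B m ` carrier_vec m)"
    unfolding dual_code_def dcond_def by (auto simp: sform_cw)
qed

lemma cw_zero: "cw B m (0\<^sub>v m) = 0\<^sub>v (2*m)"
  by (rule eq_vecI) (auto simp: cw_def bt_def)

lemma cw_eq_zero: "u \<in> carrier_vec m \<Longrightarrow> cw B m u = 0\<^sub>v (2*m) \<Longrightarrow> u = 0\<^sub>v m"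
proof (rule eq_vecI)
  fix i assume "u \<in> carrier_vec m" "cw B m u = 0\<^sub>v (2*m)" "i < dim_vec (0\<^sub>v m :: 'a vec)"
  then show "u $ i = 0\<^sub>v m $ i" using cw_lo[of i m B u] by auto
qed auto

lemma cw_inj: "u \<in> carrier_vec m \<Longrightarrow> u' \<in> carrier_vec m \<Longrightarrow> cw B m u = cw B m u' \<Longrightarrow> u = u'"
proof (rule eq_vecI)
  fix i assume "u \<in> carrier_vec m" "u' \<in> carrier_vec m" "cw B m u = cw B m u'" "i < dim_vec u'"
  then show "u $ i = u' $ i" using cw_lo[of i m B u] cw_lo[of i m B u'] by auto
qed auto

lemma LCD_iff:
  assumes s0: "\<sigma> 0 = 0"
  shows "is_LCD \<sigma> (2*m) (cw B m ` carrier_vec m) \<longleftrightarrow>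
     (\<forall>u\<in>carrier_vec m. dcond \<sigma> B m (cw B m u) \<longrightarrow> u = 0\<^sub>v m)"
proof -
  have z: "dcond \<sigma> B m (0\<^sub>v (2*m))" unfolding dcond_def using s0 by simp
  have z2: "0\<^sub>v (2 * m) \<in> cw B m ` carrier_vec m" using cw_zero[of B m, symmetric] by auto
  have cc: "cw B m u \<in> carrier_vec (2*m)" for u by (rule carrier_vecI) simp
  show ?thesis unfolding is_LCD_def dual_cw
  proof
    assume H: "cw B m ` carrier_vec m \<inter> {v \<in> carrier_vec (2 * m). dcond \<sigma> B m v} = {0\<^sub>v (2 * m)}"
    show "\<forall>u\<in>carrier_vec m. dcond \<sigma> B m (cw B m u) \<longrightarrow> u = 0\<^sub>v m"
    proof (intro ballI impI)
      fix u :: "'a vec" assume u: "u \<in> carrier_vec m" and d: "dcond \<sigma> B m (cw B m u)"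
      have "cw B m u \<in> cw B m ` carrier_vec m \<inter> {v \<in> carrier_vec (2 * m). dcond \<sigma> B m v}"
        using u d cc by blast
      then have "cw B m u = 0\<^sub>v (2*m)" using H by blast
      then show "u = 0\<^sub>v m" using cw_eq_zero u by blast
    qed
  next
    assume H: "\<forall>u\<in>carrier_vec m. dcond \<sigma> B m (cw B m u) \<longrightarrow> u = 0\<^sub>v m"
    show "cw B m ` carrier_vec m \<inter> {v \<in> carrier_vec (2 * m). dcond \<sigma> B m v} = {0\<^sub>v (2 * m)}"
    proof (rule Set.set_eqI, rule iffI)
      fix x assume "x \<in> cw B m ` carrier_vec m \<inter> {v \<in> carrier_vec (2 * m). dcond \<sigma> B m v}"
      then obtain u where u: "u \<in> carrier_vec m" "x = cw B m u" "dcond \<sigma> B m (cw B m u)" by blast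
      then have "u = 0\<^sub>v m" using H by blast
      then show "x \<in> {0\<^sub>v (2 * m)}" using u cw_zero by simp
    next
      fix x assume "x \<in> {0\<^sub>v (2 * m) :: 'a vec}"
      then show "x \<in> cw B m ` carrier_vec m \<inter> {v \<in> carrier_vec (2 * m). dcond \<sigma> B m v}"
        using z z2 by simp
    qed
  qed
qed

lemma linear_code_cw:
  assumes B: "B \<in> carrier_mat m m"
  shows "is_linear_code (2*m) m (cw B m ` carrier_vec m)"
  unfolding is_linear_code_def
proof (intro bexI[of _ "id_block m B"] conjI ballI impI)
  show "id_block m B \<in> carrier_mat m (2*m)" by (simp add: id_block_def)
  show "cw B m ` carrier_vec m = row_space (id_block m B)" using row_space_id_block[OF B] by simp
  fix u :: "'a vec" assume u: "u \<in> carrier_vec m" "transpose_mat (id_block m B) *\<^sub>v u = 0\<^sub>v (2*m)"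
  then show "u = 0\<^sub>v m" using transpose_id_block[OF B] cw_eq_zero by metis
qed

lemma min_dist_cw:
  "min_dist (cw B m ` carrier_vec m) = Min {hweight (cw B m u) | u. u \<in> carrier_vec m \<and> u \<noteq> 0\<^sub>v m}"
proof -
  have "{hweight c | c. c \<in> cw B m ` carrier_vec m \<and> c \<noteq> 0\<^sub>v (dim_vec c)} =
        {hweight (cw B m u) | u. u \<in> carrier_vec m \<and> u \<noteq> 0\<^sub>v m}"
  proof (rule Set.set_eqI, rule iffI)
    fix x assume "x \<in> {hweight c | c. c \<in> cw B m ` carrier_vec m \<and> c \<noteq> 0\<^sub>v (dim_vec c)}"
    then obtain u where u: "u \<in> carrier_vec m" "x = hweight (cw B m u)" "cw B m u \<noteq> 0\<^sub>v (2*m)" by auto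
    have "u \<noteq> 0\<^sub>v m" using u(3) cw_zero by blast
    then show "x \<in> {hweight (cw B m u) | u. u \<in> carrier_vec m \<and> u \<noteq> 0\<^sub>v m}"
      using u by blast
  next
    fix x assume "x \<in> {hweight (cw B m u) | u. u \<in> carrier_vec m \<and> u \<noteq> 0\<^sub>v m}"
    then obtain u where u: "u \<in> carrier_vec m" "x = hweight (cw B m u)" "u \<noteq> 0\<^sub>v m" by blast
    have "cw B m u \<noteq> 0\<^sub>v (dim_vec (cw B m u))" using cw_eq_zero[of u m B] u by auto
    then show "x \<in> {hweight c | c. c \<in> cw B m ` carrier_vec m \<and> c \<noteq> 0\<^sub>v (dim_vec c)}"
      using u by blast
  qed
  then show ?thesis unfolding min_dist_def by simp
qed

definition phi :: "('a::field \<Rightarrow> 'a) \<Rightarrow> (nat \<Rightarrow> nat) \<Rightarrow> nat \<Rightarrow> 'a vec \<Rightarrow> 'a vec" where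
  "phi \<sigma> \<pi> m v = vec (2*m) (\<lambda>i. if i < m then \<sigma> (- (v $ (m + \<pi> i))) else \<sigma> (v $ (\<pi> (i - m))))"
definition psi :: "('a::field \<Rightarrow> 'a) \<Rightarrow> (nat \<Rightarrow> nat) \<Rightarrow> nat \<Rightarrow> 'a vec \<Rightarrow> 'a vec" where
  "psi \<sigma> \<pi> m v = vec (2*m) (\<lambda>i. if i < m then \<sigma> (v $ (m + \<pi> i)) else - \<sigma> (v $ (\<pi> (i - m))))"

locale fsd_setup =
  fixes B :: "'a::{finite,field} mat" and m :: nat and \<pi> :: "nat \<Rightarrow> nat" and \<sigma> :: "'a \<Rightarrow> 'a"
  assumes pi_lt: "\<And>i. i < m \<Longrightarrow> \<pi> i < m"
    and pi_inv: "\<And>i. i < m \<Longrightarrow> \<pi> (\<pi> i) = i"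
    and Bsym: "\<And>i j. i < m \<Longrightarrow> j < m \<Longrightarrow> B $$ (\<pi> i, j) = B $$ (\<pi> j, i)"
    and ss: "\<And>y. \<sigma> (\<sigma> y) = y"
    and s0: "\<sigma> 0 = 0"
begin

lemma bij_pi: "bij_betw \<pi> {..<m} {..<m}"
  by (rule bij_betw_byWitness[where f' = \<pi>]) (auto simp: pi_lt pi_inv)

lemma sum_pi: "(\<Sum>i<m. g (\<pi> i)) = (\<Sum>i<m. g i)"
  by (rule sum.reindex_bij_betw[OF bij_pi])

lemma wt_pi: "wt m (\<lambda>i. g (\<pi> i)) = wt m g"
  unfolding wt_def by (rule sum_pi[where g = "\<lambda>i. if g i = 0 then 0 else 1"])

lemma s_zero_iff: "\<sigma> a = 0 \<longleftrightarrow> a = 0"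
  by (metis ss s0)

lemma s_inj: "\<sigma> a = \<sigma> b \<Longrightarrow> a = b"
  by (metis ss)

lemma phi_dual:
  assumes u: "u \<in> carrier_vec m"
  shows "dcond \<sigma> B m (phi \<sigma> \<pi> m (cw B m u))"
  unfolding dcond_def
proof (intro allI impI)
  fix i assume i: "i < m"
  have e1: "\<sigma> (phi \<sigma> \<pi> m (cw B m u) $ i) = - (\<Sum>k<m. B $$ (k, \<pi> i) * u $ k)"
    using i pi_lt[OF i] by (simp add: phi_def ss cw_hi bt_def)
  have e2: "(\<Sum>j<m. B $$ (i,j) * \<sigma> (phi \<sigma> \<pi> m (cw B m u) $ (m+j))) = (\<Sum>j<m. B $$ (i,j) * u $ (\<pi> j))"
    by (rule sum.cong) (auto simp: phi_def ss cw_lo pi_lt)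
  have e3: "(\<Sum>j<m. B $$ (i,j) * u $ (\<pi> j)) = (\<Sum>k<m. B $$ (i, \<pi> k) * u $ (\<pi> (\<pi> k)))"
    using sum_pi[where g = "\<lambda>j. B $$ (i,j) * u $ (\<pi> j)"] by simp
  also have "\<dots> = (\<Sum>k<m. B $$ (k, \<pi> i) * u $ k)"
  proof (rule sum.cong)
    fix k assume "k \<in> {..<m}"
    then have k: "k < m" by simp
    have "B $$ (\<pi> (\<pi> k), \<pi> i) = B $$ (\<pi> (\<pi> i), \<pi> k)" using Bsym pi_lt k i by blast
    then show "B $$ (i, \<pi> k) * u $ (\<pi> (\<pi> k)) = B $$ (k, \<pi> i) * u $ k"
      using pi_inv k i by simp
  qed simp
  finally show "\<sigma> (phi \<sigma> \<pi> m (cw B m u) $ i) + (\<Sum>j<m. B $$ (i,j) * \<sigma> (phi \<sigma> \<pi> m (cw B m u) $ (m+j))) = 0"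
    using e1 e2 by simp
qed

lemma phi_weight:
  assumes u: "u \<in> carrier_vec m"
  shows "hweight (phi \<sigma> \<pi> m (cw B m u)) = hweight (cw B m u)"
proof -
  have "hweight (phi \<sigma> \<pi> m (cw B m u)) = wt (2*m) (($) (phi \<sigma> \<pi> m (cw B m u)))"
    by (simp add: hweight_wt phi_def)
  also have "\<dots> = wt m (($) (phi \<sigma> \<pi> m (cw B m u))) + wt m (\<lambda>j. phi \<sigma> \<pi> m (cw B m u) $ (m+j))"
    by (rule wt_double)
  also have "wt m (($) (phi \<sigma> \<pi> m (cw B m u))) = wt m (\<lambda>i. bt B m u $ (\<pi> i))"
    by (rule wt_cong) (simp add: phi_def cw_hi pi_lt s_zero_iff)
  also have "\<dots> = wt m (($) (bt B m u))" by (rule wt_pi)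
  also have "wt m (\<lambda>j. phi \<sigma> \<pi> m (cw B m u) $ (m+j)) = wt m (\<lambda>j. u $ (\<pi> j))"
    by (rule wt_cong) (simp add: phi_def cw_lo pi_lt s_zero_iff)
  also have "\<dots> = wt m (($) u)" by (rule wt_pi)
  finally show ?thesis by (simp add: hweight_cw)
qed

lemma phi_inj: "inj_on (phi \<sigma> \<pi> m) (cw B m ` carrier_vec m)"
proof (rule inj_onI)
  fix x y assume "x \<in> cw B m ` carrier_vec m" "y \<in> cw B m ` carrier_vec m" and eq: "phi \<sigma> \<pi> m x = phi \<sigma> \<pi> m y"
  then obtain u u' where u: "u \<in> carrier_vec m" "x = cw B m u" and u': "u' \<in> carrier_vec m" "y = cw B m u'" by blast
  have "u = u'"
  proof (rule eq_vecI)
    fix i assume "i < dim_vec u'"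
    then have i: "i < m" using u' by simp
    have "phi \<sigma> \<pi> m x $ (m + \<pi> i) = phi \<sigma> \<pi> m y $ (m + \<pi> i)" using eq by simp
    then have "\<sigma> (u $ (\<pi> (\<pi> i))) = \<sigma> (u' $ (\<pi> (\<pi> i)))"
      using i pi_lt[OF i] pi_lt[OF pi_lt[OF i]] u u' by (simp add: phi_def cw_lo)
    then show "u $ i = u' $ i" using s_inj pi_inv i by metis
  qed (use u u' in simp)
  then show "x = y" using u u' by simp
qed

definition wvec :: "'a vec \<Rightarrow> 'a vec" where "wvec v = vec m (\<lambda>i. \<sigma> (v $ (m + \<pi> i)))"

lemma psi_C:
  assumes v: "v \<in> carrier_vec (2*m)" and d: "dcond \<sigma> B m v"
  shows "psi \<sigma> \<pi> m v = cw B m (wvec v)"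
proof (rule eq_vecI)
  show "dim_vec (psi \<sigma> \<pi> m v) = dim_vec (cw B m (wvec v))" by (simp add: psi_def)
  fix i assume "i < dim_vec (cw B m (wvec v))"
  then have i: "i < 2*m" by simp
  show "psi \<sigma> \<pi> m v $ i = cw B m (wvec v) $ i"
  proof (cases "i < m")
    case True
    then show ?thesis by (simp add: psi_def cw_lo wvec_def)
  next
    case False
    define j where "j = i - m"
    have j: "j < m" "i = m + j" using False i j_def by auto
    have "bt B m (wvec v) $ j = (\<Sum>k<m. B $$ (k,j) * \<sigma> (v $ (m + \<pi> k)))"
      using j by (simp add: bt_def wvec_def)
    also have "\<dots> = (\<Sum>k<m. B $$ (\<pi> (\<pi> k),j) * \<sigma> (v $ (m + \<pi> k)))"
      by (rule sum.cong) (simp_all add: pi_inv)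
    also have "\<dots> = (\<Sum>k<m. B $$ (\<pi> k,j) * \<sigma> (v $ (m + k)))"
      by (rule sum_pi[where g = "\<lambda>k. B $$ (\<pi> k,j) * \<sigma> (v $ (m + k))"])
    also have "\<dots> = (\<Sum>k<m. B $$ (\<pi> j,k) * \<sigma> (v $ (m + k)))"
      by (rule sum.cong) (simp_all add: Bsym j)
    also have "\<dots> = - \<sigma> (v $ (\<pi> j))"
    proof -
      have h: "\<sigma> (v $ (\<pi> j)) + (\<Sum>k<m. B $$ (\<pi> j,k) * \<sigma> (v $ (m + k))) = 0"
        using d pi_lt[OF j(1)] unfolding dcond_def by blast
      show ?thesis using add.inverse_unique[OF h] by simp
    qed
    finally have "bt B m (wvec v) $ j = - \<sigma> (v $ (\<pi> j))" .
    then show ?thesis using j by (simp add: psi_def cw_hi)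
  qed
qed

lemma psi_weight:
  assumes v: "v \<in> carrier_vec (2*m)"
  shows "hweight (psi \<sigma> \<pi> m v) = hweight v"
proof -
  have "hweight (psi \<sigma> \<pi> m v) = wt (2*m) (($) (psi \<sigma> \<pi> m v))"
    by (simp add: hweight_wt psi_def)
  also have "\<dots> = wt m (($) (psi \<sigma> \<pi> m v)) + wt m (\<lambda>j. psi \<sigma> \<pi> m v $ (m+j))"
    by (rule wt_double)
  also have "wt m (($) (psi \<sigma> \<pi> m v)) = wt m (\<lambda>i. v $ (m + \<pi> i))"
    by (rule wt_cong) (simp add: psi_def s_zero_iff)
  also have "\<dots> = wt m (\<lambda>i. v $ (m + i))" by (rule wt_pi[where g = "\<lambda>i. v $ (m + i)"])
  also have "wt m (\<lambda>j. psi \<sigma> \<pi> m v $ (m+j)) = wt m (\<lambda>j. v $ (\<pi> j))"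
    by (rule wt_cong) (simp add: psi_def s_zero_iff)
  also have "\<dots> = wt m (($) v)" by (rule wt_pi)
  also have "wt m (\<lambda>i. v $ (m + i)) + wt m (($) v) = wt (2*m) (($) v)"
    by (simp add: wt_double)
  also have "\<dots> = hweight v" using v by (simp add: hweight_wt)
  finally show ?thesis .
qed

lemma psi_inj: "inj_on (psi \<sigma> \<pi> m) (carrier_vec (2*m))"
proof (rule inj_onI)
  fix v v' assume v: "v \<in> carrier_vec (2*m)" and v': "v' \<in> carrier_vec (2*m)"
    and eq: "psi \<sigma> \<pi> m v = psi \<sigma> \<pi> m v'"
  have A: "v $ (m + \<pi> i) = v' $ (m + \<pi> i)" if i: "i < m" for i
  proof -
    have "psi \<sigma> \<pi> m v $ i = psi \<sigma> \<pi> m v' $ i" using eq by simp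
    then show ?thesis using i by (simp add: psi_def) (metis s_inj)
  qed
  have Bq: "v $ (\<pi> j) = v' $ (\<pi> j)" if j: "j < m" for j
  proof -
    have "psi \<sigma> \<pi> m v $ (m+j) = psi \<sigma> \<pi> m v' $ (m+j)" using eq by simp
    then show ?thesis using j by (simp add: psi_def) (metis s_inj)
  qed
  show "v = v'"
  proof (rule eq_vecI)
    fix k assume "k < dim_vec v'"
    then have k: "k < 2*m" using v' by simp
    show "v $ k = v' $ k"
    proof (cases "k < m")
      case True
      then show ?thesis using Bq[OF pi_lt[OF True]] pi_inv[OF True] by simp
    next
      case False
      define i where "i = \<pi> (k - m)"
      have "k - m < m" using k False by simp
      then have "i < m" "\<pi> i = k - m" using i_def pi_lt pi_inv by auto
      then show ?thesis using A[of i] False by simp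
    qed
  qed (use v v' in simp)
qed

lemma fsd: "formally_self_dual \<sigma> (2*m) (cw B m ` carrier_vec m)"
  unfolding formally_self_dual_def dual_cw
proof
  fix w
  let ?C = "{c \<in> cw B m ` carrier_vec m. hweight c = w}"
  let ?D = "{c \<in> {v \<in> carrier_vec (2 * m). dcond \<sigma> B m v}. hweight c = w}"
  have fin: "finite ?C" "finite ?D"
    by (rule finite_subset[OF _ finite_carrier_vec_fin[of "2*m"]], auto intro: carrier_vecI)+
  have "card ?C \<le> card ?D"
  proof (rule card_inj_on_le[OF _ _ fin(2)])
    show "inj_on (phi \<sigma> \<pi> m) ?C" by (rule inj_on_subset[OF phi_inj]) auto
    show "phi \<sigma> \<pi> m ` ?C \<subseteq> ?D"
    proof
      fix y assume "y \<in> phi \<sigma> \<pi> m ` ?C"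
      then obtain u where u: "u \<in> carrier_vec m" "y = phi \<sigma> \<pi> m (cw B m u)" "hweight (cw B m u) = w" by blast
      then show "y \<in> ?D" using phi_dual[OF u(1)] phi_weight[OF u(1)]
        by (auto simp: phi_def intro!: carrier_vecI)
    qed
  qed
  moreover have "card ?D \<le> card ?C"
  proof (rule card_inj_on_le[OF _ _ fin(1)])
    show "inj_on (psi \<sigma> \<pi> m) ?D" by (rule inj_on_subset[OF psi_inj]) auto
    show "psi \<sigma> \<pi> m ` ?D \<subseteq> ?C"
    proof
      fix y assume "y \<in> psi \<sigma> \<pi> m ` ?D"
      then obtain v where v: "v \<in> carrier_vec (2*m)" "dcond \<sigma> B m v" "y = psi \<sigma> \<pi> m v" "hweight v = w" by blast
      have "wvec v \<in> carrier_vec m" by (simp add: wvec_def)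
      then show "y \<in> ?C" using psi_C[OF v(1,2)] psi_weight[OF v(1)] v by auto
    qed
  qed
  ultimately show "card ?C = card ?D" by simp
qed

end

locale blocks =
  fixes n s :: nat and B1 B2 :: "'a::field mat"
  assumes n0: "0 < n" and s0: "0 < s"
    and B1: "B1 \<in> carrier_mat n n" and B2: "B2 \<in> carrier_mat n n"
begin

definition K :: nat where "K = 2 * s"
definition M :: nat where "M = K * n"
definition Bt :: "nat \<Rightarrow> 'a mat" where "Bt t = (if t < s then B1 else B2)"
definition Bbig :: "'a mat" where
  "Bbig = mat M M (\<lambda>(i,j). if i div n = j div n then Bt (i div n) $$ (i mod n, j mod n) else 0)"
definition blk :: "nat \<Rightarrow> 'a vec \<Rightarrow> 'a vec" where "blk t u = vec n (\<lambda>i. u $ (t*n+i))"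
definition emb :: "nat \<Rightarrow> 'a vec \<Rightarrow> 'a vec" where
  "emb t w = vec M (\<lambda>i. if i div n = t then w $ (i mod n) else 0)"

lemma Bt_carrier: "Bt t \<in> carrier_mat n n" using B1 B2 by (simp add: Bt_def)

lemma Bbig_carrier: "Bbig \<in> carrier_mat M M" by (simp add: Bbig_def)

lemma idx_div: "i < n \<Longrightarrow> (t*n+i) div n = t" using n0 by simp
lemma idx_mod: "i < n \<Longrightarrow> (t*n+i) mod n = i" by simp
lemma idx_lt: "t < K \<Longrightarrow> i < n \<Longrightarrow> t*n+i < M"
proof -
  assume "t < K" "i < n"
  then have "t*n + i < t*n + n" by simp
  also have "\<dots> = Suc t * n" by simp
  also have "\<dots> \<le> K * n" using \<open>t < K\<close> by (intro mult_right_mono) auto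
  finally show ?thesis by (simp add: M_def)
qed

lemma Bbig_idx: "t < K \<Longrightarrow> i < n \<Longrightarrow> t' < K \<Longrightarrow> j < n \<Longrightarrow>
   Bbig $$ (t*n+i, t'*n+j) = (if t = t' then Bt t $$ (i,j) else 0)"
  using idx_lt[of t i] idx_lt[of t' j] by (simp add: Bbig_def idx_div idx_mod)

lemma sumB_col:
  assumes t: "t < K" and j: "j < n"
  shows "(\<Sum>k<M. Bbig $$ (k, t*n+j) * g k) = (\<Sum>k<n. Bt t $$ (k, j) * g (t*n+k))"
proof -
  have "(\<Sum>k<M. Bbig $$ (k, t*n+j) * g k) = (\<Sum>t'<K. \<Sum>k<n. Bbig $$ (t'*n+k, t*n+j) * g (t'*n+k))"
    unfolding M_def by (rule sum_blocks)
  also have "\<dots> = (\<Sum>t'<K. if t' = t then (\<Sum>k<n. Bt t $$ (k, j) * g (t*n+k)) else 0)"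
    by (rule sum.cong) (auto simp: Bbig_idx t j)
  also have "\<dots> = (\<Sum>k<n. Bt t $$ (k, j) * g (t*n+k))" using t by simp
  finally show ?thesis .
qed

lemma sumB_row:
  assumes t: "t < K" and i: "i < n"
  shows "(\<Sum>j<M. Bbig $$ (t*n+i, j) * g j) = (\<Sum>j<n. Bt t $$ (i, j) * g (t*n+j))"
proof -
  have "(\<Sum>j<M. Bbig $$ (t*n+i, j) * g j) = (\<Sum>t'<K. \<Sum>j<n. Bbig $$ (t*n+i, t'*n+j) * g (t'*n+j))"
    unfolding M_def by (rule sum_blocks)
  also have "\<dots> = (\<Sum>t'<K. if t' = t then (\<Sum>j<n. Bt t $$ (i, j) * g (t*n+j)) else 0)"
    by (rule sum.cong) (auto simp: Bbig_idx t i)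
  also have "\<dots> = (\<Sum>j<n. Bt t $$ (i, j) * g (t*n+j))" using t by simp
  finally show ?thesis .
qed

lemma blk_bt: "t < K \<Longrightarrow> blk t (bt Bbig M u) = bt (Bt t) n (blk t u)"
  by (rule eq_vecI) (auto simp: blk_def bt_def idx_lt sumB_col)

lemma wt_blocks: "wt M g = (\<Sum>t<K. wt n (\<lambda>j. g (t*n+j)))"
  unfolding wt_def M_def by (rule sum_blocks)

lemma hweight_big:
  "hweight (cw Bbig M u) = (\<Sum>t<K. hweight (cw (Bt t) n (blk t u)))"
proof -
  have "hweight (cw Bbig M u) = wt M (($) u) + wt M (($) (bt Bbig M u))" by (rule hweight_cw)
  also have "wt M (($) u) = (\<Sum>t<K. wt n (($) (blk t u)))"
    unfolding wt_blocks by (rule sum.cong) (auto intro!: wt_cong simp: blk_def)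
  also have "wt M (($) (bt Bbig M u)) = (\<Sum>t<K. wt n (($) (bt (Bt t) n (blk t u))))"
    unfolding wt_blocks
  proof (rule sum.cong)
    fix t assume "t \<in> {..<K}"
    then have t: "t < K" by simp
    show "wt n (\<lambda>j. bt Bbig M u $ (t * n + j)) = wt n (($) (bt (Bt t) n (blk t u)))"
      using blk_bt[OF t, of u] by (intro wt_cong) (metis blk_def index_vec)
  qed simp
  finally show ?thesis by (simp add: hweight_cw sum.distrib)
qed

lemma dcond_big:
  assumes t: "t < K" and d: "dcond \<sigma> Bbig M (cw Bbig M u)"
  shows "dcond \<sigma> (Bt t) n (cw (Bt t) n (blk t u))"
  unfolding dcond_def
proof (intro allI impI)
  fix i assume i: "i < n"
  have ti: "t*n+i < M" using idx_lt[OF t i] .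
  have h: "\<sigma> (cw Bbig M u $ (t*n+i)) + (\<Sum>j<M. Bbig $$ (t*n+i, j) * \<sigma> (cw Bbig M u $ (M+j))) = 0"
    using d ti unfolding dcond_def by blast
  have "(\<Sum>j<M. Bbig $$ (t*n+i, j) * \<sigma> (cw Bbig M u $ (M+j))) =
        (\<Sum>j<n. Bt t $$ (i, j) * \<sigma> (cw Bbig M u $ (M+(t*n+j))))"
    by (rule sumB_row[OF t i])
  also have "\<dots> = (\<Sum>j<n. Bt t $$ (i, j) * \<sigma> (cw (Bt t) n (blk t u) $ (n+j)))"
  proof (rule sum.cong)
    fix j assume "j \<in> {..<n}"
    then have j: "j < n" by simp
    have "cw Bbig M u $ (M+(t*n+j)) = bt Bbig M u $ (t*n+j)" using idx_lt[OF t j] by (simp add: cw_hi)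
    also have "\<dots> = blk t (bt Bbig M u) $ j" using j by (simp add: blk_def)
    also have "\<dots> = cw (Bt t) n (blk t u) $ (n+j)" using j by (simp add: blk_bt[OF t] cw_hi)
    finally show "Bt t $$ (i, j) * \<sigma> (cw Bbig M u $ (M+(t*n+j))) = Bt t $$ (i, j) * \<sigma> (cw (Bt t) n (blk t u) $ (n+j))"
      by simp
  qed simp
  finally show "\<sigma> (cw (Bt t) n (blk t u) $ i) + (\<Sum>j<n. Bt t $$ (i, j) * \<sigma> (cw (Bt t) n (blk t u) $ (n+j))) = 0"
    using h ti i by (simp add: cw_lo blk_def)
qed

lemma blk_carrier: "blk t u \<in> carrier_vec n" by (simp add: blk_def)

lemma blk_zero:
  assumes u: "u \<in> carrier_vec M" and z: "\<And>t. t < K \<Longrightarrow> blk t u = 0\<^sub>v n"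
  shows "u = 0\<^sub>v M"
proof (rule eq_vecI)
  fix i assume "i < dim_vec (0\<^sub>v M :: 'a vec)"
  then have i: "i < M" by simp
  define t where "t = i div n"
  have tK: "t < K" using i n0 unfolding t_def M_def by (simp add: less_mult_imp_div_less)
  have im: "i mod n < n" using n0 by simp
  have "i = t*n + i mod n" unfolding t_def by simp
  then have "u $ i = blk t u $ (i mod n)" using im by (simp add: blk_def)
  then show "u $ i = 0\<^sub>v M $ i" using z[OF tK] im i by simp
qed (use u in simp)

lemma LCD_big:
  assumes sz: "\<sigma> 0 = 0"
    and L1: "is_LCD \<sigma> (2*n) (cw B1 n ` carrier_vec n)"
    and L2: "is_LCD \<sigma> (2*n) (cw B2 n ` carrier_vec n)"
  shows "is_LCD \<sigma> (2*M) (cw Bbig M ` carrier_vec M)"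
  unfolding LCD_iff[where \<sigma>=\<sigma>, OF sz]
proof (intro ballI impI)
  fix u :: "'a vec" assume u: "u \<in> carrier_vec M" and d: "dcond \<sigma> Bbig M (cw Bbig M u)"
  have Lt: "is_LCD \<sigma> (2*n) (cw (Bt t) n ` carrier_vec n)" for t using L1 L2 by (simp add: Bt_def)
  show "u = 0\<^sub>v M"
  proof (rule blk_zero[OF u])
    fix t assume t: "t < K"
    show "blk t u = 0\<^sub>v n" using Lt[of t, unfolded LCD_iff[where \<sigma>=\<sigma>, OF sz]] dcond_big[OF t d] blk_carrier by blast
  qed
qed

lemma linear_big: "is_linear_code (2*M) M (cw Bbig M ` carrier_vec M)"
  by (rule linear_code_cw[OF Bbig_carrier])

lemma blk_emb: "w \<in> carrier_vec n \<Longrightarrow> t < K \<Longrightarrow> t' < K \<Longrightarrow> blk t' (emb t w) = (if t' = t then w else 0\<^sub>v n)"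
  by (rule eq_vecI) (auto simp: blk_def emb_def idx_lt idx_div idx_mod)

lemma emb_carrier: "emb t w \<in> carrier_vec M" by (simp add: emb_def)

lemma hweight_zero: "hweight (0\<^sub>v k :: 'a vec) = 0" by (simp add: hweight_def)

lemma hweight_emb:
  assumes w: "w \<in> carrier_vec n" and t: "t < K"
  shows "hweight (cw Bbig M (emb t w)) = hweight (cw (Bt t) n w)"
proof -
  have "hweight (cw Bbig M (emb t w)) = (\<Sum>t'<K. hweight (cw (Bt t') n (blk t' (emb t w))))"
    by (rule hweight_big)
  also have "\<dots> = (\<Sum>t'<K. if t' = t then hweight (cw (Bt t) n w) else 0)"
    by (rule sum.cong) (auto simp: blk_emb[OF w t] cw_zero hweight_zero)
  also have "\<dots> = hweight (cw (Bt t) n w)" using t by simp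
  finally show ?thesis .
qed

definition S :: "'a mat \<Rightarrow> nat \<Rightarrow> nat set" where
  "S B m = {hweight (cw B m u) | u. u \<in> carrier_vec m \<and> u \<noteq> 0\<^sub>v m}"

lemma S_finite: "finite (S B m)"
proof -
  have "S B m \<subseteq> {..2*m}"
  proof
    fix x assume "x \<in> S B m"
    then obtain u where "x = hweight (cw B m u)" unfolding S_def by blast
    moreover have "hweight (cw B m u) \<le> 2*m"
    proof -
      have "hweight (cw B m u) \<le> card {..<2*m}" unfolding hweight_def
        by (rule card_mono) auto
      then show ?thesis by simp
    qed
    ultimately show "x \<in> {..2*m}" by simp
  qed
  then show ?thesis using finite_subset by blast
qed

lemma unit_nonzero: "unit_vec n 0 \<noteq> (0\<^sub>v n :: 'a vec)"
proof
  assume "unit_vec n 0 = (0\<^sub>v n :: 'a vec)"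
  then have "unit_vec n 0 $ 0 = (0\<^sub>v n :: 'a vec) $ 0" by simp
  then show False using n0 by (simp add: unit_vec_def)
qed

lemma S_ne: "S B n \<noteq> {}"
proof -
  have "hweight (cw B n (unit_vec n 0)) \<in> S B n"
    unfolding S_def mem_Collect_eq by (intro exI[of _ "unit_vec n 0"]) (simp add: unit_nonzero)
  then show ?thesis by blast
qed

lemma min_big:
  "min_dist (cw Bbig M ` carrier_vec M) = min (min_dist (cw B1 n ` carrier_vec n)) (min_dist (cw B2 n ` carrier_vec n))"
proof -
  have St: "S (Bt t) n = S B1 n \<or> S (Bt t) n = S B2 n" for t by (simp add: Bt_def)
  have ge: "x \<ge> min (Min (S B1 n)) (Min (S B2 n))" if x: "x \<in> S Bbig M" for x
  proof -
    obtain u where u: "u \<in> carrier_vec M" "u \<noteq> 0\<^sub>v M" "x = hweight (cw Bbig M u)" using x unfolding S_def by blast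
    obtain t where t: "t < K" "blk t u \<noteq> 0\<^sub>v n" using blk_zero[OF u(1)] u(2) by blast
    have "hweight (cw (Bt t) n (blk t u)) \<le> (\<Sum>t'<K. hweight (cw (Bt t') n (blk t' u)))"
      using t(1) by (intro member_le_sum) auto
    then have "hweight (cw (Bt t) n (blk t u)) \<le> x" using u(3) hweight_big by simp
    moreover have "hweight (cw (Bt t) n (blk t u)) \<in> S (Bt t) n" unfolding S_def using t(2) blk_carrier by blast
    then have "Min (S (Bt t) n) \<le> hweight (cw (Bt t) n (blk t u))" using S_finite by (rule Min_le[rotated])
    ultimately show ?thesis using St[of t] by auto
  qed
  have inS: "Min (S (Bt t) n) \<in> S Bbig M" if t: "t < K" for t
  proof -
    have "Min (S (Bt t) n) \<in> S (Bt t) n" using S_finite S_ne by (rule Min_in)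
    then obtain w where w: "w \<in> carrier_vec n" "w \<noteq> 0\<^sub>v n" "Min (S (Bt t) n) = hweight (cw (Bt t) n w)"
      unfolding S_def by blast
    have "emb t w \<noteq> 0\<^sub>v M"
    proof
      assume "emb t w = 0\<^sub>v M"
      then have "blk t (emb t w) = blk t (0\<^sub>v M)" by simp
      moreover have "blk t (0\<^sub>v M) = (0\<^sub>v n :: 'a vec)"
        by (rule eq_vecI) (auto simp: blk_def idx_lt[OF t])
      ultimately show False using blk_emb[OF w(1) t t] w(2) by simp
    qed
    then have "hweight (cw Bbig M (emb t w)) \<in> S Bbig M" unfolding S_def using emb_carrier by blast
    then show ?thesis using hweight_emb[OF w(1) t] w(3) by simp
  qed
  have K1: "Bt 0 = B1" "0 < K" using s0 by (auto simp: Bt_def K_def)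
  have K2: "Bt s = B2" "s < K" using s0 by (auto simp: Bt_def K_def)
  have "Min (S Bbig M) = min (Min (S B1 n)) (Min (S B2 n))"
  proof (rule antisym)
    have m1: "Min (S B1 n) \<in> S Bbig M" using inS[OF K1(2)] K1(1) by simp
    have m2: "Min (S B2 n) \<in> S Bbig M" using inS[OF K2(2)] K2(1) by simp
    show "Min (S Bbig M) \<le> min (Min (S B1 n)) (Min (S B2 n))"
      using Min_le[OF S_finite m1] Min_le[OF S_finite m2] by (rule min.boundedI)
    show "min (Min (S B1 n)) (Min (S B2 n)) \<le> Min (S Bbig M)"
    proof -
      have ne: "S Bbig M \<noteq> {}" using m1 by blast
      have "Min (S Bbig M) \<in> S Bbig M" by (rule Min_in[OF S_finite ne])
      then show ?thesis by (rule ge)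
    qed
  qed
  then show ?thesis unfolding min_dist_cw S_def .
qed

definition pib :: "nat \<Rightarrow> nat" where "pib i = (i div n) * n + (n - 1 - i mod n)"

lemma decomp: "I < M \<Longrightarrow> I div n < K \<and> I mod n < n \<and> I = (I div n) * n + I mod n"
  using n0 by (auto simp: M_def less_mult_imp_div_less)

lemma pib_eq: "t < K \<Longrightarrow> r < n \<Longrightarrow> pib (t*n+r) = t*n + (n - 1 - r)"
  by (simp add: pib_def idx_div idx_mod)

lemma pib_lt: "I < M \<Longrightarrow> pib I < M"
proof -
  assume I: "I < M"
  have d: "I div n < K" "I mod n < n" using decomp[OF I] by auto
  have "n - 1 - I mod n < n" using n0 by simp
  then show ?thesis unfolding pib_def using idx_lt[OF d(1)] by blast
qed

lemma pib_inv: "I < M \<Longrightarrow> pib (pib I) = I"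
proof -
  assume I: "I < M"
  have d: "I div n < K" "I mod n < n" "I = (I div n) * n + I mod n" using decomp[OF I] by auto
  have r: "n - 1 - I mod n < n" using n0 by simp
  have "pib (pib I) = pib ((I div n) * n + (n - 1 - I mod n))" unfolding pib_def by simp
  also have "\<dots> = (I div n) * n + (n - 1 - (n - 1 - I mod n))" by (rule pib_eq[OF d(1) r])
  also have "\<dots> = (I div n) * n + I mod n" using d(2) by simp
  finally show ?thesis using d(3) by simp
qed

lemma Bbig_sym:
  assumes Bs: "\<And>t i j. i < n \<Longrightarrow> j < n \<Longrightarrow> Bt t $$ (n - 1 - i, j) = Bt t $$ (n - 1 - j, i)"
    and I: "I < M" and J: "J < M"
  shows "Bbig $$ (pib I, J) = Bbig $$ (pib J, I)"
proof -
  obtain t r where tr: "t < K" "r < n" "I = t*n + r" using decomp[OF I] by blast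
  obtain t' r' where tr': "t' < K" "r' < n" "J = t'*n + r'" using decomp[OF J] by blast
  have r1: "n - 1 - r < n" "n - 1 - r' < n" using n0 by auto
  have pI: "pib I = t*n + (n - 1 - r)" using tr pib_eq by simp
  have pJ: "pib J = t'*n + (n - 1 - r')" using tr' pib_eq by simp
  have "Bbig $$ (pib I, J) = (if t = t' then Bt t $$ (n - 1 - r, r') else 0)"
    unfolding pI tr'(3) by (rule Bbig_idx[OF tr(1) r1(1) tr'(1) tr'(2)])
  also have "\<dots> = (if t' = t then Bt t' $$ (n - 1 - r', r) else 0)"
    using Bs[OF tr(2) tr'(2), of t] by auto
  also have "\<dots> = Bbig $$ (pib J, I)"
    unfolding pJ tr(3) by (rule Bbig_idx[OF tr'(1) r1(2) tr(1) tr(2), symmetric])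
  finally show ?thesis .
qed

end

definition persym :: "nat \<Rightarrow> 'a mat \<Rightarrow> bool" where
  "persym n A \<longleftrightarrow> (\<forall>i<n. \<forall>j<n. A $$ (j, i) = A $$ (n - 1 - i, n - 1 - j))"

lemma toeplitz_persym: "toeplitz n A \<Longrightarrow> persym n A"
  unfolding toeplitz_def persym_def
proof (intro allI impI)
  fix i j assume H: "A \<in> carrier_mat n n \<and> (\<forall>i j i' j'. i < n \<and> j < n \<and> i' < n \<and> j' < n \<and>
        int j - int i = int j' - int i' \<longrightarrow> A $$ (i, j) = A $$ (i', j'))" and i: "i < n" and j: "j < n"
  have "int i - int j = int (n - 1 - j) - int (n - 1 - i)" using i j by simp
  moreover have T: "\<And>a b c d. a < n \<Longrightarrow> b < n \<Longrightarrow> c < n \<Longrightarrow> d < n \<Longrightarrow>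
      int b - int a = int d - int c \<Longrightarrow> A $$ (a, b) = A $$ (c, d)" using H by blast
  moreover have "n - 1 - i < n" "n - 1 - j < n" using i j by auto
  ultimately show "A $$ (j, i) = A $$ (n - 1 - i, n - 1 - j)" using i j by blast
qed

lemma mat_mult_idx:
  assumes "A \<in> carrier_mat n n" "B \<in> carrier_mat n n" "i < n" "j < n"
  shows "(A * B) $$ (i, j) = (\<Sum>l<n. A $$ (i, l) * B $$ (l, j))"
  using assms by (simp add: scalar_prod_def lessThan_atLeast0)

lemma sum_rev: "(\<Sum>l<n. g (n - 1 - l)) = (\<Sum>l<(n::nat). g l)"
proof -
  have "(\<Sum>l<n. g (n - 1 - l)) = (\<Sum>l<n. g (n - Suc l))" by simp
  also have "\<dots> = (\<Sum>l<n. g l)" by (rule sum.nat_diff_reindex)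
  finally show ?thesis .
qed

lemma persym_mult:
  fixes A B :: "'a::field mat"
  assumes A: "A \<in> carrier_mat n n" and B: "B \<in> carrier_mat n n"
    and pA: "persym n A" and pB: "persym n B"
  shows "\<forall>i<n. \<forall>j<n. (A * B) $$ (j, i) = (B * A) $$ (n - 1 - i, n - 1 - j)"
proof (intro allI impI)
  fix i j assume i: "i < n" and j: "j < n"
  have "(A * B) $$ (j, i) = (\<Sum>l<n. A $$ (j, l) * B $$ (l, i))" by (rule mat_mult_idx[OF A B j i])
  also have "\<dots> = (\<Sum>l<n. B $$ (n - 1 - i, n - 1 - l) * A $$ (n - 1 - l, n - 1 - j))"
  proof (rule sum.cong)
    fix l assume "l \<in> {..<n}"
    then have l: "l < n" by simp
    have "A $$ (j, l) = A $$ (n - 1 - l, n - 1 - j)" by (rule pA[unfolded persym_def, rule_format, OF l j])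
    moreover have "B $$ (l, i) = B $$ (n - 1 - i, n - 1 - l)" by (rule pB[unfolded persym_def, rule_format, OF i l])
    ultimately show "A $$ (j, l) * B $$ (l, i) = B $$ (n - 1 - i, n - 1 - l) * A $$ (n - 1 - l, n - 1 - j)"
      by (simp only:) (rule mult.commute)
  qed simp
  also have "\<dots> = (\<Sum>l<n. B $$ (n - 1 - i, l) * A $$ (l, n - 1 - j))"
    by (rule sum_rev[where g = "\<lambda>l. B $$ (n - 1 - i, l) * A $$ (l, n - 1 - j)"])
  also have "\<dots> = (B * A) $$ (n - 1 - i, n - 1 - j)"
    using i j by (intro mat_mult_idx[symmetric, OF B A]) auto
  finally show "(A * B) $$ (j, i) = (B * A) $$ (n - 1 - i, n - 1 - j)" .
qed

lemma pow_comm: fixes A :: "'a::field mat" assumes A: "A \<in> carrier_mat n n" shows "A ^\<^sub>m k * A = A * A ^\<^sub>m k"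
proof (induction k)
  case 0 then show ?case using A by simp
next
  case (Suc k)
  have "A ^\<^sub>m Suc k * A = (A ^\<^sub>m k * A) * A" by simp
  also have "\<dots> = (A * A ^\<^sub>m k) * A" using Suc by simp
  also have "\<dots> = A * (A ^\<^sub>m k * A)" using A by (intro assoc_mult_mat) auto
  finally show ?case by simp
qed

lemma persym_one: "persym n (1\<^sub>m n)"
  unfolding persym_def by auto

lemma persym_pow:
  fixes A :: "'a::field mat"
  assumes A: "A \<in> carrier_mat n n" and pA: "persym n A"
  shows "persym n (A ^\<^sub>m k)"
proof (induction k)
  case 0 then show ?case using A persym_one by simp
next
  case (Suc k)
  have "\<forall>i<n. \<forall>j<n. (A ^\<^sub>m k * A) $$ (j, i) = (A * A ^\<^sub>m k) $$ (n - 1 - i, n - 1 - j)"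
    by (rule persym_mult[OF _ A Suc pA]) (use A in simp)
  then show ?case unfolding persym_def using pow_comm[OF A, of k] by (metis pow_mat.simps(2))
qed

lemma persym_poly_mat:
  assumes A: "A \<in> carrier_mat n n" and pA: "persym n A"
  shows "persym n (poly_mat n f A)"
  unfolding persym_def
proof (intro allI impI)
  fix i j assume i: "i < n" and j: "j < n"
  have "poly_mat n f A $$ (j, i) = (\<Sum>k\<le>degree f. coeff f k * (A ^\<^sub>m k) $$ (j, i))"
    using i j by (simp add: poly_mat_def)
  also have "\<dots> = (\<Sum>k\<le>degree f. coeff f k * (A ^\<^sub>m k) $$ (n - 1 - i, n - 1 - j))"
  proof (rule sum.cong)
    fix k assume "k \<in> {..degree f}"
    have "(A ^\<^sub>m k) $$ (j, i) = (A ^\<^sub>m k) $$ (n - 1 - i, n - 1 - j)"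
      by (rule persym_pow[OF A pA, of k, unfolded persym_def, rule_format, OF i j])
    then show "coeff f k * (A ^\<^sub>m k) $$ (j, i) = coeff f k * (A ^\<^sub>m k) $$ (n - 1 - i, n - 1 - j)" by simp
  qed simp
  also have "\<dots> = poly_mat n f A $$ (n - 1 - i, n - 1 - j)"
    using i j by (simp add: poly_mat_def)
  finally show "poly_mat n f A $$ (j, i) = poly_mat n f A $$ (n - 1 - i, n - 1 - j)" .
qed

lemma persym_sym:
  assumes "persym n B" "i < n" "j < n"
  shows "B $$ (n - 1 - i, j) = B $$ (n - 1 - j, i)"
proof -
  have h: "\<forall>i'<n. \<forall>j'<n. B $$ (j', i') = B $$ (n - 1 - i', n - 1 - j')"
    using assms(1) unfolding persym_def .
  have "n - 1 - i < n" using assms(2) by simp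
  then have "B $$ (n - 1 - i, j) = B $$ (n - 1 - j, n - 1 - (n - 1 - i))" using h[rule_format, OF assms(3)] by blast
  then show ?thesis using assms(2) by simp
qed

lemma fermat_field: fixes x :: "'a::{finite,field}" shows "x ^ card (UNIV :: 'a set) = x"
proof (cases "x = 0")
  case True
  have "0 < card (UNIV :: 'a set)" by (simp add: finite_UNIV_card_ge_0)
  then show ?thesis using True by simp
next
  case False
  let ?U = "UNIV - {0::'a}"
  have bij: "bij_betw (\<lambda>y. x * y) ?U ?U"
    by (rule bij_betw_byWitness[where f' = "\<lambda>y. y / x"]) (use False in auto)
  have "(\<Prod>y\<in>?U. x * y) = (\<Prod>y\<in>?U. y)" by (rule prod.reindex_bij_betw[OF bij])
  moreover have "(\<Prod>y\<in>?U. x * y) = x ^ card ?U * (\<Prod>y\<in>?U. y)"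
    by (simp add: prod.distrib)
  moreover have "(\<Prod>y\<in>?U. y) \<noteq> 0" by simp
  ultimately have "x ^ card ?U = 1" by simp
  moreover have "card ?U = card (UNIV :: 'a set) - 1" by (simp add: card_Diff_singleton)
  moreover have "card (UNIV :: 'a set) = Suc (card (UNIV :: 'a set) - 1)" using finite_UNIV_card_ge_0[where ?'a = 'a] by simp
  ultimately show ?thesis by (metis power_Suc2 mult_1)
qed

theorem theorem5:
  fixes n :: nat
    and f1 f2 :: "'a::{finite,field} poly"
    and A1 A2 :: "'a mat"
    and \<sigma> :: "'a \<Rightarrow> 'a"
  assumes n: "n \<ge> 1"
    and T1: "toeplitz n A1" and T2: "toeplitz n A2"
    and form: "\<sigma> = (\<lambda>y. y) \<or>
       (\<exists>(p::nat) m. prime p \<and> m \<ge> 1 \<and> card (UNIV :: 'a set) = p ^ (2 * m) \<and> \<sigma> = (\<lambda>y. y ^ (p ^ m)))"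
    and L1: "is_LCD \<sigma> (2 * n) (row_space (id_block n (poly_mat n f1 A1)))"
    and L2: "is_LCD \<sigma> (2 * n) (row_space (id_block n (poly_mat n f2 A2)))"
  shows "\<forall>s::nat. s \<ge> 1 \<longrightarrow> (\<exists>C :: 'a vec set.
           is_linear_code (4 * s * n) (2 * s * n) C \<and>
           min_dist C = min (min_dist (row_space (id_block n (poly_mat n f1 A1))))
                            (min_dist (row_space (id_block n (poly_mat n f2 A2)))) \<and>
           formally_self_dual \<sigma> (4 * s * n) C \<and>
           is_LCD \<sigma> (4 * s * n) C)"
proof (intro allI impI)
  fix s :: nat assume s: "s \<ge> 1"
  define B1 where "B1 = poly_mat n f1 A1"
  define B2 where "B2 = poly_mat n f2 A2"
  have B1c: "B1 \<in> carrier_mat n n" unfolding B1_def poly_mat_def by simp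
  have B2c: "B2 \<in> carrier_mat n n" unfolding B2_def poly_mat_def by simp
  interpret bl: blocks n s B1 B2 using n s B1c B2c by unfold_locales auto
  have ss: "\<sigma> (\<sigma> y) = y" for y
  proof (cases "\<sigma> = (\<lambda>y. y)")
    case True then show ?thesis by simp
  next
    case False
    then obtain p m where pm: "prime p" "m \<ge> 1" "card (UNIV :: 'a set) = p ^ (2 * m)" "\<sigma> = (\<lambda>y. y ^ (p ^ m))"
      using form by blast
    have "\<sigma> (\<sigma> y) = y ^ (p ^ m * p ^ m)" using pm(4) by (simp add: power_mult)
    also have "p ^ m * p ^ m = card (UNIV :: 'a set)" using pm(3) by (simp add: power_add[symmetric] mult_2)
    also have "y ^ card (UNIV :: 'a set) = y" by (rule fermat_field)
    finally show ?thesis .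
  qed
  have s0: "\<sigma> 0 = 0"
  proof (cases "\<sigma> = (\<lambda>y. y)")
    case True then show ?thesis by simp
  next
    case False
    then obtain p m where pm: "prime p" "\<sigma> = (\<lambda>y. y ^ (p ^ m))"
      using form by blast
    have "p ^ m \<noteq> 0" using pm(1) by (simp add: prime_gt_0_nat)
    then show ?thesis using pm(2) by simp
  qed
  have A1c: "A1 \<in> carrier_mat n n" using T1 unfolding toeplitz_def by blast
  have A2c: "A2 \<in> carrier_mat n n" using T2 unfolding toeplitz_def by blast
  have P1: "persym n B1" unfolding B1_def by (rule persym_poly_mat[OF A1c toeplitz_persym[OF T1]])
  have P2: "persym n B2" unfolding B2_def by (rule persym_poly_mat[OF A2c toeplitz_persym[OF T2]])
  have Bs: "bl.Bt t $$ (n - 1 - i, j) = bl.Bt t $$ (n - 1 - j, i)" if "i < n" "j < n" for t i j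
    using persym_sym[OF P1 that] persym_sym[OF P2 that] by (simp add: bl.Bt_def)
  interpret fs: fsd_setup bl.Bbig bl.M bl.pib \<sigma>
  proof
    show "\<And>i. i < bl.M \<Longrightarrow> bl.pib i < bl.M" by (rule bl.pib_lt)
    show "\<And>i. i < bl.M \<Longrightarrow> bl.pib (bl.pib i) = i" by (rule bl.pib_inv)
    show "\<And>i j. i < bl.M \<Longrightarrow> j < bl.M \<Longrightarrow> bl.Bbig $$ (bl.pib i, j) = bl.Bbig $$ (bl.pib j, i)"
      by (rule bl.Bbig_sym[OF Bs])
    show "\<And>y. \<sigma> (\<sigma> y) = y" by (rule ss)
    show "\<sigma> 0 = 0" by (rule s0)
  qed
  have M1: "2 * s * n = bl.M" by (simp add: bl.M_def bl.K_def)
  have M2: "4 * s * n = 2 * bl.M" by (simp add: bl.M_def bl.K_def)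
  have R1: "row_space (id_block n (poly_mat n f1 A1)) = cw B1 n ` carrier_vec n"
    unfolding B1_def[symmetric] by (rule row_space_id_block[OF B1c])
  have R2: "row_space (id_block n (poly_mat n f2 A2)) = cw B2 n ` carrier_vec n"
    unfolding B2_def[symmetric] by (rule row_space_id_block[OF B2c])
  show "\<exists>C :: 'a vec set.
           is_linear_code (4 * s * n) (2 * s * n) C \<and>
           min_dist C = min (min_dist (row_space (id_block n (poly_mat n f1 A1))))
                            (min_dist (row_space (id_block n (poly_mat n f2 A2)))) \<and>
           formally_self_dual \<sigma> (4 * s * n) C \<and>
           is_LCD \<sigma> (4 * s * n) C"
    unfolding M1 M2 R1 R2
  proof (intro exI[of _ "cw bl.Bbig bl.M ` carrier_vec bl.M"] conjI)
    show "is_linear_code (2 * bl.M) bl.M (cw bl.Bbig bl.M ` carrier_vec bl.M)" by (rule bl.linear_big)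
    show "min_dist (cw bl.Bbig bl.M ` carrier_vec bl.M) =
      min (min_dist (cw B1 n ` carrier_vec n)) (min_dist (cw B2 n ` carrier_vec n))" by (rule bl.min_big)
    show "formally_self_dual \<sigma> (2 * bl.M) (cw bl.Bbig bl.M ` carrier_vec bl.M)" by (rule fs.fsd)
    show "is_LCD \<sigma> (2 * bl.M) (cw bl.Bbig bl.M ` carrier_vec bl.M)"
      by (rule bl.LCD_big[where \<sigma>=\<sigma>, OF s0]) (use L1 L2 R1 R2 in simp_all)
  qed
qed

end
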